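(* Let $\varepsilon>0$, let $\mathcal S=\{S_1,\dots,S_K,S_\infty\}$ be a family of pairwise disjoint subsets of $\{2,\dots,n\}$ and $\rho\in\{1,\dots,\lceil1/\varepsilon\rceil\}^K$. Every extreme point $x^*$ of $P(\mathcal S,\rho)$ has at most two fractional components; moreover, if it has exactly two fractional components, then both lie in the same set $S_h$ for some $h\in[K]$ (not in $S_\infty$).
   Context: Minimum Knapsack data: $n$ items with costs $c\in\mathbb{R}^n_{\ge0}$, weights $w\in\mathbb{R}^n_{\ge0}$ and target $b$. For $\mathcal S$ and $\rho$ as in the claim, $P(\mathcal S,\rho)$ is the set of $x\in\mathbb{R}^n$ satisfying: $x_1=1$; $w^Tx\ge b$; $\sum_{i\in S_k}x_i=\rho_k$ for all $k\in[K]$ with $\rho_k<\lceil1/\varepsilon\rceil$; $\sum_{i\in S_k}x_i\ge\rho_k$ for all $k\in[K]$ with $\rho_k=\lceil1/\varepsilon\rceil$; $x_i=0$ for all $i\in\{2,\dots,n\}\setminus\bigcup_{k\in[K]\cup\{\infty\}}S_k$; and $0\le x_i\le1$ for all $i\in\bigcup_{k\in[K]\cup\{\infty\}}S_k$. *)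

theory Defs
  imports "HOL-Analysis.Analysis"
begin

text \<open>Vectors of R^n are represented as functions nat \<Rightarrow> real whose support is
  contained in the index set {1..n}; coordinates outside {1..n} are fixed to 0.
  The sets S_1..S_K are given by S :: nat \<Rightarrow> nat set (used on {1..K}),
  and S_\<infinity> by Sinf.\<close>

definition minknap_P ::
  "nat \<Rightarrow> (nat \<Rightarrow> real) \<Rightarrow> real \<Rightarrow> real \<Rightarrow> nat \<Rightarrow> (nat \<Rightarrow> nat set) \<Rightarrow> nat set
     \<Rightarrow> (nat \<Rightarrow> nat) \<Rightarrow> (nat \<Rightarrow> real) set" where
  "minknap_P n w b \<epsilon> K S Sinf \<rho> =
     {x. (\<forall>i. i \<notin> {1..n} \<longrightarrow> x i = 0)
       \<and> x 1 = 1
       \<and> (\<Sum>i=1..n. w i * x i) \<ge> b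
       \<and> (\<forall>k\<in>{1..K}. int (\<rho> k) < \<lceil>1/\<epsilon>\<rceil> \<longrightarrow> (\<Sum>i\<in>S k. x i) = real (\<rho> k))
       \<and> (\<forall>k\<in>{1..K}. int (\<rho> k) = \<lceil>1/\<epsilon>\<rceil> \<longrightarrow> (\<Sum>i\<in>S k. x i) \<ge> real (\<rho> k))
       \<and> (\<forall>i\<in>{2..n}. i \<notin> (\<Union>k\<in>{1..K}. S k) \<union> Sinf \<longrightarrow> x i = 0)
       \<and> (\<forall>i\<in>(\<Union>k\<in>{1..K}. S k) \<union> Sinf. 0 \<le> x i \<and> x i \<le> 1)}"

definition is_extreme_point :: "(nat \<Rightarrow> real) \<Rightarrow> (nat \<Rightarrow> real) set \<Rightarrow> bool" where
  "is_extreme_point x P \<longleftrightarrow> x \<in> P \<and>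
     \<not> (\<exists>y\<in>P. \<exists>z\<in>P. y \<noteq> z \<and> (\<exists>t::real. 0 < t \<and> t < 1 \<and> x = (\<lambda>i. (1 - t) * y i + t * z i)))"

end

theory Submission
  imports Defs
begin

theorem lemma2:
  fixes n K :: nat and c w :: "nat \<Rightarrow> real" and b \<epsilon> :: real
    and S :: "nat \<Rightarrow> nat set" and Sinf :: "nat set" and \<rho> :: "nat \<Rightarrow> nat"
    and xs :: "nat \<Rightarrow> real"
  assumes c_nonneg: "\<forall>i\<in>{1..n}. c i \<ge> 0"
    and w_nonneg: "\<forall>i\<in>{1..n}. w i \<ge> 0"
    and eps_pos: "\<epsilon> > 0"
    and S_sub: "\<forall>k\<in>{1..K}. S k \<subseteq> {2..n}"
    and Sinf_sub: "Sinf \<subseteq> {2..n}"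
    and S_disj: "\<forall>k\<in>{1..K}. \<forall>l\<in>{1..K}. k \<noteq> l \<longrightarrow> S k \<inter> S l = {}"
    and S_Sinf_disj: "\<forall>k\<in>{1..K}. S k \<inter> Sinf = {}"
    and rho_range: "\<forall>k\<in>{1..K}. 1 \<le> \<rho> k \<and> int (\<rho> k) \<le> \<lceil>1/\<epsilon>\<rceil>"
    and extreme: "is_extreme_point xs (minknap_P n w b \<epsilon> K S Sinf \<rho>)"
  shows "card {i\<in>{1..n}. xs i \<notin> \<int>} \<le> 2
       \<and> (card {i\<in>{1..n}. xs i \<notin> \<int>} = 2 \<longrightarrow>
            (\<exists>h\<in>{1..K}. {i\<in>{1..n}. xs i \<notin> \<int>} \<subseteq> S h))"
proof -
  define P where "P = minknap_P n w b \<epsilon> K S Sinf \<rho>"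
  define F where "F = {i\<in>{1..n}. xs i \<notin> \<int>}"
  define U where "U = (\<Union>k\<in>{1..K}. S k) \<union> Sinf"
  define tight where "tight k \<longleftrightarrow> (\<Sum>i\<in>S k. xs i) = real (\<rho> k)" for k
  define W where "W v = (\<Sum>i=1..n. w i * v i)" for v :: "nat \<Rightarrow> real"
  define good where "good v \<longleftrightarrow> (\<forall>i. i \<notin> F \<longrightarrow> v i = 0) \<and> (\<forall>k\<in>{1..K}. tight k \<longrightarrow> (\<Sum>i\<in>S k. v i) = 0)" for v :: "nat \<Rightarrow> real"
  have xP: "xs \<in> P" and noconv: "\<not> (\<exists>y\<in>P. \<exists>z\<in>P. y \<noteq> z \<and> (\<exists>t::real. 0<t \<and> t<1 \<and> xs = (\<lambda>i. (1-t)*y i + t * z i)))"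
    using extreme unfolding is_extreme_point_def P_def by auto
  have xout: "\<forall>i. i \<notin> {1..n} \<longrightarrow> xs i = 0" and x1: "xs 1 = 1" and xw: "(\<Sum>i=1..n. w i * xs i) \<ge> b"
    and xeq: "\<forall>k\<in>{1..K}. int (\<rho> k) < \<lceil>1/\<epsilon>\<rceil> \<longrightarrow> (\<Sum>i\<in>S k. xs i) = real (\<rho> k)"
    and xge: "\<forall>k\<in>{1..K}. int (\<rho> k) = \<lceil>1/\<epsilon>\<rceil> \<longrightarrow> (\<Sum>i\<in>S k. xs i) \<ge> real (\<rho> k)"
    and xzero: "\<forall>i\<in>{2..n}. i \<notin> U \<longrightarrow> xs i = 0"
    and xbox: "\<forall>i\<in>U. 0 \<le> xs i \<and> xs i \<le> 1"
    using xP unfolding P_def minknap_P_def U_def by auto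
  have finS: "finite (S k)" if "k \<in> {1..K}" for k
    using S_sub that by (meson finite_atLeastAtMost finite_subset)
  have finF: "finite F" unfolding F_def by simp
  have Fsub: "F \<subseteq> {1..n}" unfolding F_def by auto
  have F_U: "i \<in> U" and F_01: "0 < xs i \<and> xs i < 1" if "i \<in> F" for i
  proof -
    from that have i: "i \<in> {1..n}" "xs i \<notin> \<int>" unfolding F_def by auto
    have "i \<noteq> 1" using x1 i by auto
    hence i2: "i \<in> {2..n}" using i by auto
    show iU: "i \<in> U"
    proof (rule ccontr)
      assume "i \<notin> U" then have "xs i = 0" using xzero i2 by auto
      with i show False by auto
    qed
    have "xs i \<noteq> 0" "xs i \<noteq> 1" using i by auto
    then show "0 < xs i \<and> xs i < 1" using xbox iU by force
  qed
  have ntight: "(\<Sum>i\<in>S k. xs i) > real (\<rho> k)" if "k \<in> {1..K}" "\<not> tight k" for k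
  proof -
    have "\<not> int (\<rho> k) < \<lceil>1/\<epsilon>\<rceil>" using xeq that tight_def by auto
    then have "int (\<rho> k) = \<lceil>1/\<epsilon>\<rceil>" using rho_range that by force
    then have "(\<Sum>i\<in>S k. xs i) \<ge> real (\<rho> k)" using xge that by auto
    then show ?thesis using that(2) tight_def by auto
  qed
  have perturb: "False" if gd: "good d" and Wd: "W d = 0" and dnz: "d p \<noteq> 0" for d p
  proof -
    define y where "y t = (\<lambda>i. xs i + t * d i)" for t :: real
    have lim: "((\<lambda>t. a + t * c) \<longlongrightarrow> a) (at (0::real))" for a c :: real
    proof -
      have "((\<lambda>t. a + t * c) \<longlongrightarrow> a + 0 * c) (at (0::real))" by (intro tendsto_intros)
      then show ?thesis by simp
    qed
    have ev1: "\<forall>i\<in>F. eventually (\<lambda>t. 0 \<le> y t i \<and> y t i \<le> 1) (at 0)"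
    proof
      fix i assume "i \<in> F"
      then have a: "0 < xs i" "xs i < 1" using F_01 by auto
      have "eventually (\<lambda>t. 0 < xs i + t * d i) (at 0)" using order_tendstoD(1)[OF lim a(1)] .
      moreover have "eventually (\<lambda>t. xs i + t * d i < 1) (at 0)" using order_tendstoD(2)[OF lim a(2)] .
      ultimately show "eventually (\<lambda>t. 0 \<le> y t i \<and> y t i \<le> 1) (at 0)"
        unfolding y_def by eventually_elim auto
    qed
    have sumy: "(\<Sum>i\<in>A. y t i) = (\<Sum>i\<in>A. xs i) + t * (\<Sum>i\<in>A. d i)" for A t
      unfolding y_def by (simp add: sum.distrib sum_distrib_left)
    have ev2: "\<forall>k\<in>{k\<in>{1..K}. \<not> tight k}. eventually (\<lambda>t. (\<Sum>i\<in>S k. y t i) > real (\<rho> k)) (at 0)"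
    proof
      fix k assume "k \<in> {k\<in>{1..K}. \<not> tight k}"
      then have "(\<Sum>i\<in>S k. xs i) > real (\<rho> k)" using ntight by auto
      from order_tendstoD(1)[OF lim this]
      show "eventually (\<lambda>t. (\<Sum>i\<in>S k. y t i) > real (\<rho> k)) (at 0)" by (simp add: sumy)
    qed
    have "eventually (\<lambda>t. (\<forall>i\<in>F. 0 \<le> y t i \<and> y t i \<le> 1) \<and> (\<forall>k\<in>{k\<in>{1..K}. \<not> tight k}. (\<Sum>i\<in>S k. y t i) > real (\<rho> k))) (at 0)"
      using eventually_ball_finite[OF finF ev1] eventually_ball_finite[OF _ ev2]
      by (auto intro: eventually_conj)
    then obtain e where e: "e > 0" and eP: "\<And>t. t \<noteq> 0 \<Longrightarrow> dist t 0 < e \<Longrightarrow>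
        (\<forall>i\<in>F. 0 \<le> y t i \<and> y t i \<le> 1) \<and> (\<forall>k\<in>{k\<in>{1..K}. \<not> tight k}. (\<Sum>i\<in>S k. y t i) > real (\<rho> k))"
      unfolding eventually_at by auto
    have d0: "d i = 0" if "i \<notin> F" for i using gd that good_def by auto
    have yx: "y t i = xs i" if "i \<notin> F" for i t using d0[OF that] y_def by simp
    have yP: "y t \<in> P" if c1: "\<forall>i\<in>F. 0 \<le> y t i \<and> y t i \<le> 1"
      and c2: "\<forall>k\<in>{k\<in>{1..K}. \<not> tight k}. (\<Sum>i\<in>S k. y t i) > real (\<rho> k)" for t
    proof -
      have A1: "\<forall>i. i \<notin> {1..n} \<longrightarrow> y t i = 0"
      proof (intro allI impI)
        fix i assume i: "i \<notin> {1..n}"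
        then have "i \<notin> F" using Fsub by blast
        then show "y t i = 0" using yx xout i by simp
      qed
      have A2: "y t 1 = 1" using yx x1 F_def by auto
      have "(\<Sum>i=1..n. w i * y t i) = (\<Sum>i=1..n. w i * xs i) + t * W d"
        unfolding y_def W_def by (simp add: algebra_simps sum.distrib sum_distrib_left)
      hence A3: "(\<Sum>i=1..n. w i * y t i) \<ge> b" using Wd xw by simp
      have A4: "\<forall>k\<in>{1..K}. int (\<rho> k) < \<lceil>1/\<epsilon>\<rceil> \<longrightarrow> (\<Sum>i\<in>S k. y t i) = real (\<rho> k)"
      proof (intro ballI impI)
        fix k assume k: "k \<in> {1..K}" "int (\<rho> k) < \<lceil>1/\<epsilon>\<rceil>"
        then have "tight k" using xeq tight_def by auto
        then show "(\<Sum>i\<in>S k. y t i) = real (\<rho> k)" using gd k good_def tight_def sumy by auto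
      qed
      have A5: "\<forall>k\<in>{1..K}. int (\<rho> k) = \<lceil>1/\<epsilon>\<rceil> \<longrightarrow> (\<Sum>i\<in>S k. y t i) \<ge> real (\<rho> k)"
      proof (intro ballI impI)
        fix k assume k: "k \<in> {1..K}" "int (\<rho> k) = \<lceil>1/\<epsilon>\<rceil>"
        show "(\<Sum>i\<in>S k. y t i) \<ge> real (\<rho> k)"
        proof (cases "tight k")
          case True
          then show ?thesis using gd k good_def tight_def sumy by auto
        next
          case False
          then show ?thesis using c2 k by force
        qed
      qed
      have A6: "\<forall>i\<in>{2..n}. i \<notin> U \<longrightarrow> y t i = 0"
      proof (intro ballI impI)
        fix i assume i: "i \<in> {2..n}" "i \<notin> U"
        then have "xs i = 0" using xzero by auto
        then have "i \<notin> F" unfolding F_def by auto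
        then show "y t i = 0" using yx \<open>xs i = 0\<close> by auto
      qed
      have A7: "\<forall>i\<in>U. 0 \<le> y t i \<and> y t i \<le> 1"
      proof
        fix i assume "i \<in> U"
        show "0 \<le> y t i \<and> y t i \<le> 1"
        proof (cases "i \<in> F")
          case True then show ?thesis using c1 by auto
        next
          case False then show ?thesis using yx xbox \<open>i \<in> U\<close> by auto
        qed
      qed
      show ?thesis unfolding P_def minknap_P_def mem_Collect_eq U_def[symmetric]
        by (intro conjI A1 A2 A3 A4 A5 A6 A7)
    qed
    have y1: "y (e/2) \<in> P" using yP eP[of "e/2"] e by auto
    have y2: "y (-(e/2)) \<in> P" using yP eP[of "-(e/2)"] e by auto
    have ne: "y (e/2) \<noteq> y (-(e/2))"
    proof
      assume "y (e/2) = y (-(e/2))"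
      then have "y (e/2) p = y (-(e/2)) p" by simp
      then have "(e/2) * d p = -(e/2) * d p" unfolding y_def by simp
      then show False using e dnz by simp
    qed
    have "xs = (\<lambda>i. (1 - 1/2) * y (e/2) i + 1/2 * y (-(e/2)) i)"
      unfolding y_def by (rule ext) (simp add: algebra_simps)
    then have "\<exists>y\<in>P. \<exists>z\<in>P. y \<noteq> z \<and> (\<exists>t::real. 0<t \<and> t<1 \<and> xs = (\<lambda>i. (1-t)*y i + t * z i))"
      using y1 y2 ne by (intro bexI[where x="y (e/2)"] bexI[where x="y (-(e/2))"] conjI exI[where x="1/2"]) auto
    then show False using noconv by blast
  qed
  have comb: False if g1: "good v1" and g2: "good v2" and p: "v1 p \<noteq> 0" "v2 p = 0"
    and q: "v2 q \<noteq> 0" "v1 q = 0" for v1 v2 p q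
  proof (cases "W v1 = 0 \<and> W v2 = 0")
    case True then show ?thesis using perturb[of v1 p] g1 p by auto
  next
    case False
    obtain \<alpha> \<beta> where ab: "\<alpha> = W v2" "\<beta> = W v1" by blast
    define d where "d = (\<lambda>i. \<alpha> * v1 i - \<beta> * v2 i)"
    have "good d" using g1 g2 unfolding good_def d_def
      by (auto simp: sum_subtractf sum_distrib_left[symmetric])
    moreover have "W d = 0"
    proof -
      have "W d = \<alpha> * W v1 - \<beta> * W v2" unfolding W_def d_def
        by (simp add: sum_subtractf sum_distrib_left algebra_simps)
      then show ?thesis using ab by simp
    qed
    moreover have "d p \<noteq> 0 \<or> d q \<noteq> 0" using False ab p q unfolding d_def by auto
    ultimately show False using perturb by blast
  qed
  have other: "\<exists>t'\<in>F \<inter> S k. t' \<noteq> t" if k: "k \<in> {1..K}" "tight k" and t: "t \<in> F" "t \<in> S k" for k t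
  proof (rule ccontr)
    assume nt: "\<not> ?thesis"
    have o: "\<forall>j\<in>S k - {t}. xs j \<in> \<int>"
    proof
      fix j assume j: "j \<in> S k - {t}"
      then have "j \<in> {2..n}" using S_sub k(1) by blast
      then have "j \<in> {1..n}" by simp
      then show "xs j \<in> \<int>" using j nt unfolding F_def by blast
    qed
    have "(\<Sum>i\<in>S k. xs i) = xs t + (\<Sum>i\<in>S k - {t}. xs i)" using sum.remove[OF finS[OF k(1)] t(2)] by simp
    moreover have "(\<Sum>i\<in>S k - {t}. xs i) \<in> \<int>" using o by (intro Ints_sum) auto
    ultimately have "xs t = real (\<rho> k) - (\<Sum>i\<in>S k - {t}. xs i)" using k tight_def by simp
    moreover have "real (\<rho> k) - (\<Sum>i\<in>S k - {t}. xs i) \<in> \<int>"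
      using \<open>(\<Sum>i\<in>S k - {t}. xs i) \<in> \<int>\<close> by (intro Ints_diff) auto
    ultimately have "xs t \<in> \<int>" by simp
    then show False using t F_def by auto
  qed
  define free where "free i \<longleftrightarrow> i \<in> F \<and> (i \<in> Sinf \<or> (\<exists>k\<in>{1..K}. i \<in> S k \<and> \<not> tight k))" for i
  have cls: "free i \<or> (\<exists>k\<in>{1..K}. i \<in> S k \<and> tight k)" if "i \<in> F" for i
    using F_U[OF that] that unfolding U_def free_def by blast
  have free_notin: "i \<notin> S k" if "free i" "k\<in>{1..K}" "tight k" for i k
  proof
    assume ik: "i \<in> S k"
    from that(1) have "i \<in> Sinf \<or> (\<exists>k'\<in>{1..K}. i \<in> S k' \<and> \<not> tight k')" unfolding free_def by blast
    then show False
    proof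
      assume "i \<in> Sinf"
      then show False using S_Sinf_disj that(2) ik by blast
    next
      assume "\<exists>k'\<in>{1..K}. i \<in> S k' \<and> \<not> tight k'"
      then obtain k' where k': "k' \<in> {1..K}" "i \<in> S k'" "\<not> tight k'" by blast
      then have "k' \<noteq> k" using that(3) by auto
      then have "S k \<inter> S k' = {}" using S_disj that(2) k'(1) by blast
      then show False using ik k'(2) by blast
    qed
  qed
  define e where "e i = (\<lambda>j. if j = i then 1 else (0::real))" for i :: nat
  have good_e: "good (e i)" if "free i" for i
    unfolding good_def
  proof (intro conjI allI ballI impI)
    fix j assume "j \<notin> F" then show "e i j = 0" using that free_def e_def by auto
  next
    fix k assume "k \<in> {1..K}" "tight k"
    then have "i \<notin> S k" using free_notin that by auto
    then show "(\<Sum>j\<in>S k. e i j) = 0" unfolding e_def by (auto intro!: sum.neutral)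
  qed
  define pr where "pr i j = (\<lambda>m. e i m - e j m)" for i j
  have good_pr: "good (pr i j)" if k: "k\<in>{1..K}" "tight k" and ij: "i \<in> F \<inter> S k" "j \<in> F \<inter> S k" for i j k
    unfolding good_def
  proof (intro conjI allI ballI impI)
    fix m assume "m \<notin> F" then show "pr i j m = 0" using ij pr_def e_def by auto
  next
    fix k' assume k': "k' \<in> {1..K}" "tight k'"
    show "(\<Sum>m\<in>S k'. pr i j m) = 0"
    proof (cases "k' = k")
      case True
      then show ?thesis using ij finS[OF k(1)] unfolding pr_def e_def by (simp add: sum_subtractf)
    next
      case False
      then have "i \<notin> S k'" "j \<notin> S k'" using S_disj k k' ij by blast+
      then show ?thesis unfolding pr_def e_def by (auto intro!: sum.neutral)
    qed
  qed
  show ?thesis unfolding F_def[symmetric]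
  proof (rule ccontr)
    assume neg: "\<not> (card F \<le> 2 \<and> (card F = 2 \<longrightarrow> (\<exists>h\<in>{1..K}. F \<subseteq> S h)))"
    show False
    proof (cases "\<exists>i j. free i \<and> free j \<and> i \<noteq> j")
      case True
      then obtain i j where ij: "free i" "free j" "i \<noteq> j" by blast
      show False using comb[OF good_e[OF ij(1)] good_e[OF ij(2)], of i j] ij(3) unfolding e_def by auto
    next
      case nf2: False
      show False
      proof (cases "\<exists>i k t. free i \<and> k\<in>{1..K} \<and> tight k \<and> t \<in> F \<and> t \<in> S k")
        case True
        then obtain i k t where ikt: "free i" "k\<in>{1..K}" "tight k" "t \<in> F" "t \<in> S k" by blast
        then obtain t' where t': "t' \<in> F \<inter> S k" "t' \<noteq> t" using other by blast
        have "i \<notin> S k" using free_notin ikt by auto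
        then have "i \<noteq> t" "i \<noteq> t'" using ikt t' by auto
        then show False using comb[OF good_e[OF ikt(1)] good_pr[OF ikt(2,3), of t t'], of i t] ikt t'
          unfolding pr_def e_def by auto
      next
        case nf1: False
        show False
        proof (cases "\<exists>t\<in>F. \<exists>k\<in>{1..K}. t \<in> S k \<and> tight k")
          case False
          then have allfree: "\<forall>i\<in>F. free i" using cls by blast
          have "card F \<le> 1"
          proof (cases "F = {}")
            case True then show ?thesis by simp
          next
            case False
            then obtain i where "i \<in> F" by blast
            then have "F \<subseteq> {i}" using allfree nf2 by blast
            then show ?thesis using card_mono[of "{i}" F] by simp
          qed
          then show False using neg by simp
        next
          case True
          then obtain t k where tk: "t \<in> F" "k\<in>{1..K}" "t \<in> S k" "tight k" by blast
          then obtain t' where t': "t' \<in> F \<inter> S k" "t' \<noteq> t" using other by blast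
          have nofree: "\<not> free i" for i using nf1 tk by blast
          show False
          proof (cases "F \<subseteq> S k")
            case True
            then have "\<not> card F \<le> 2" using neg tk by blast
            have "F - {t, t'} \<noteq> {}"
            proof
              assume "F - {t, t'} = {}"
              then have "F \<subseteq> {t, t'}" by blast
              then have "card F \<le> card {t, t'}" by (intro card_mono) auto
              also have "\<dots> \<le> 2" by (simp add: card_insert_if)
              finally show False using \<open>\<not> card F \<le> 2\<close> by simp
            qed
            then obtain c where c: "c \<in> F" "c \<noteq> t" "c \<noteq> t'" by blast
            show False using comb[OF good_pr[OF tk(2,4), of t t'] good_pr[OF tk(2,4), of c t'], of t c]
                tk t' c True unfolding pr_def e_def by auto
          next
            case False
            then obtain s where s: "s \<in> F" "s \<notin> S k" by blast
            then obtain l where l: "l \<in> {1..K}" "s \<in> S l" "tight l" using cls nofree by blast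
            then obtain s' where s': "s' \<in> F \<inter> S l" "s' \<noteq> s" using other s by blast
            have "l \<noteq> k" using s l by auto
            then have dj: "S k \<inter> S l = {}" using S_disj l tk by blast
            have "t \<noteq> s" "t \<noteq> s'" "t' \<noteq> s" using dj tk t' s' l s by auto
            then show False using comb[OF good_pr[OF tk(2,4), of t t'] good_pr[OF l(1,3), of s s'], of t s]
                tk t' s' s l unfolding pr_def e_def by auto
          qed
        qed
      qed
    qed
  qed
qed

end
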